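(* Let $(f^*,g^* )$ be a stationary $\hat\alpha$-discounted Nash equilibrium of a two-player continuous time stochastic game for some $\hat\alpha>0$, with $\|\mu\|>0$, and suppose: (M1) $(f^*,g^* )$ is pure, i.e. for each $s\in S$ there are $a^1_s\in A^1(s)$, $a^2_s\in A^2(s)$ with $f^*(s,a^1_s)=1$, $g^*(s,a^2_s)=1$; (M2) there exist $p_s\ge0$ with $\sum_{s\in S}p_s=1$ such that $Q(f^*,g^* )_{ss'}=\|\mu\|\,(p_{s'}-\delta(s,s'))$ for all $s,s'\in S$; (M3) for all $s\in S$, $a^1\in A^1(s)$: $\sum_{s'}p_{s'}r^1(s',a^1_{s'},a^2_{s'})\ge\sum_{s'}\left(\frac{\mu(s',s,a^1,a^2_s)}{\|\mu\|}+\delta(s,s')\right)r^1(s',a^1_{s'},a^2_{s'})$, and for all $s\in S$, $a^2\in A^2(s)$: $\sum_{s'}p_{s'}r^2(s',a^1_{s'},a^2_{s'})\ge\sum_{s'}\left(\frac{\mu(s',s,a^1_s,a^2)}{\|\mu\|}+\delta(s,s')\right)r^2(s',a^1_{s'},a^2_{s'})$. Then $(f^*,g^* )$ is a Blackwell-Nash equilibrium.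
   Context: A two-player continuous time stochastic game consists of a finite state set $S$, finite nonempty action sets $A^1(s),A^2(s)$, reward rates $r^i(s,a^1,a^2)$ ($i=1,2$), and transition rates $\mu(s',s,a^1,a^2)\ge0$ from $s$ to $s'\ne s$, with $\mu(s,s,a^1,a^2)=-\sum_{s'\ne s}\mu(s',s,a^1,a^2)$. Let $\|\mu\|=\max_{s,a^1,a^2}\sum_{s'\ne s}\mu(s',s,a^1,a^2)$ and let $\delta(s,s')$ be the Kronecker delta. Stationary strategies $f,g$ assign to each state a probability distribution on $A^1(s)$, resp. $A^2(s)$. For a stationary pair, $r^i(s,f,g)=\sum_{a^1,a^2}f(s,a^1)g(s,a^2)r^i(s,a^1,a^2)$ and $Q(f,g)$ is the generator matrix with $Q(f,g)_{ss'}=\sum_{a^1,a^2}f(s,a^1)g(s,a^2)\mu(s',s,a^1,a^2)$. For $\alpha>0$ the $\alpha$-discounted payoff is $v^i_\alpha(f,g)=(\alpha I-Q(f,g))^{-1}r^i(f,g)$ (equivalently $E^s_{f,g}\int_0^\infty e^{-\alpha t}r^i(s_t,f,g)dt$). A stationary pair $(f^*,g^* )$ is an $\alpha$-discounted Nash equilibrium if for all $s$, $v^1_\alpha(s,f^*,g^* )\ge v^1_\alpha(s,f,g^* )$ for all stationary $f$ and $v^2_\alpha(s,f^*,g^* )\ge v^2_\alpha(s,f^*,g)$ for all stationary $g$. It is a Blackwell-Nash equilibrium (BNE) if there is $\alpha_0>0$ such that it is an $\alpha$-discounted Nash equilibrium for all $\alpha\in(0,\alpha_0]$. *)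

theory Defs
  imports "HOL-Analysis.Analysis"
begin

text \<open>Two-player continuous time stochastic game. States: a finite type 's.
 Action sets A1 s, A2 s. Rewards r s a1 a2. Transition rates mu s' s a1 a2
 (rate from s to s').\<close>

definition ctsg :: "('s::finite \<Rightarrow> 'a1 set) \<Rightarrow> ('s \<Rightarrow> 'a2 set)
   \<Rightarrow> ('s \<Rightarrow> 's \<Rightarrow> 'a1 \<Rightarrow> 'a2 \<Rightarrow> real) \<Rightarrow> bool" where
  "ctsg A1 A2 mu \<longleftrightarrow>
     (\<forall>s. finite (A1 s) \<and> A1 s \<noteq> {} \<and> finite (A2 s) \<and> A2 s \<noteq> {}) \<and>
     (\<forall>s s' a1 a2. a1 \<in> A1 s \<longrightarrow> a2 \<in> A2 s \<longrightarrow> s' \<noteq> s \<longrightarrow> mu s' s a1 a2 \<ge> 0) \<and>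
     (\<forall>s a1 a2. a1 \<in> A1 s \<longrightarrow> a2 \<in> A2 s \<longrightarrow>
        mu s s a1 a2 = - (\<Sum>s'\<in>UNIV - {s}. mu s' s a1 a2))"

definition mu_norm :: "('s::finite \<Rightarrow> 'a1 set) \<Rightarrow> ('s \<Rightarrow> 'a2 set)
   \<Rightarrow> ('s \<Rightarrow> 's \<Rightarrow> 'a1 \<Rightarrow> 'a2 \<Rightarrow> real) \<Rightarrow> real" where
  "mu_norm A1 A2 mu = Max {(\<Sum>s'\<in>UNIV - {s}. mu s' s a1 a2) | s a1 a2. a1 \<in> A1 s \<and> a2 \<in> A2 s}"

definition stationary :: "('s \<Rightarrow> 'a set) \<Rightarrow> ('s \<Rightarrow> 'a \<Rightarrow> real) \<Rightarrow> bool" where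
  "stationary A f \<longleftrightarrow> (\<forall>s. (\<forall>a\<in>A s. f s a \<ge> 0) \<and> (\<Sum>a\<in>A s. f s a) = 1)"

definition rew :: "('s::finite \<Rightarrow> 'a1 set) \<Rightarrow> ('s \<Rightarrow> 'a2 set)
   \<Rightarrow> ('s \<Rightarrow> 'a1 \<Rightarrow> 'a2 \<Rightarrow> real) \<Rightarrow> ('s \<Rightarrow> 'a1 \<Rightarrow> real) \<Rightarrow> ('s \<Rightarrow> 'a2 \<Rightarrow> real) \<Rightarrow> real^'s" where
  "rew A1 A2 r f g = (\<chi> s. \<Sum>a1\<in>A1 s. \<Sum>a2\<in>A2 s. f s a1 * g s a2 * r s a1 a2)"

definition genQ :: "('s::finite \<Rightarrow> 'a1 set) \<Rightarrow> ('s \<Rightarrow> 'a2 set)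
   \<Rightarrow> ('s \<Rightarrow> 's \<Rightarrow> 'a1 \<Rightarrow> 'a2 \<Rightarrow> real) \<Rightarrow> ('s \<Rightarrow> 'a1 \<Rightarrow> real) \<Rightarrow> ('s \<Rightarrow> 'a2 \<Rightarrow> real) \<Rightarrow> real^'s^'s" where
  "genQ A1 A2 mu f g = (\<chi> s s'. \<Sum>a1\<in>A1 s. \<Sum>a2\<in>A2 s. f s a1 * g s a2 * mu s' s a1 a2)"

definition disc_payoff :: "('s::finite \<Rightarrow> 'a1 set) \<Rightarrow> ('s \<Rightarrow> 'a2 set)
   \<Rightarrow> ('s \<Rightarrow> 's \<Rightarrow> 'a1 \<Rightarrow> 'a2 \<Rightarrow> real) \<Rightarrow> ('s \<Rightarrow> 'a1 \<Rightarrow> 'a2 \<Rightarrow> real) \<Rightarrow> real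
   \<Rightarrow> ('s \<Rightarrow> 'a1 \<Rightarrow> real) \<Rightarrow> ('s \<Rightarrow> 'a2 \<Rightarrow> real) \<Rightarrow> real^'s" where
  "disc_payoff A1 A2 mu r \<alpha> f g =
     matrix_inv (\<alpha> *\<^sub>R mat 1 - genQ A1 A2 mu f g) *v rew A1 A2 r f g"

definition disc_NE :: "('s::finite \<Rightarrow> 'a1 set) \<Rightarrow> ('s \<Rightarrow> 'a2 set)
   \<Rightarrow> ('s \<Rightarrow> 's \<Rightarrow> 'a1 \<Rightarrow> 'a2 \<Rightarrow> real) \<Rightarrow> ('s \<Rightarrow> 'a1 \<Rightarrow> 'a2 \<Rightarrow> real) \<Rightarrow> ('s \<Rightarrow> 'a1 \<Rightarrow> 'a2 \<Rightarrow> real)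
   \<Rightarrow> real \<Rightarrow> ('s \<Rightarrow> 'a1 \<Rightarrow> real) \<Rightarrow> ('s \<Rightarrow> 'a2 \<Rightarrow> real) \<Rightarrow> bool" where
  "disc_NE A1 A2 mu r1 r2 \<alpha> fs gs \<longleftrightarrow>
     stationary A1 fs \<and> stationary A2 gs \<and>
     (\<forall>s. (\<forall>f. stationary A1 f \<longrightarrow>
              disc_payoff A1 A2 mu r1 \<alpha> fs gs $ s \<ge> disc_payoff A1 A2 mu r1 \<alpha> f gs $ s) \<and>
          (\<forall>g. stationary A2 g \<longrightarrow>
              disc_payoff A1 A2 mu r2 \<alpha> fs gs $ s \<ge> disc_payoff A1 A2 mu r2 \<alpha> fs g $ s))"

definition blackwell_NE :: "('s::finite \<Rightarrow> 'a1 set) \<Rightarrow> ('s \<Rightarrow> 'a2 set)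
   \<Rightarrow> ('s \<Rightarrow> 's \<Rightarrow> 'a1 \<Rightarrow> 'a2 \<Rightarrow> real) \<Rightarrow> ('s \<Rightarrow> 'a1 \<Rightarrow> 'a2 \<Rightarrow> real) \<Rightarrow> ('s \<Rightarrow> 'a1 \<Rightarrow> 'a2 \<Rightarrow> real)
   \<Rightarrow> ('s \<Rightarrow> 'a1 \<Rightarrow> real) \<Rightarrow> ('s \<Rightarrow> 'a2 \<Rightarrow> real) \<Rightarrow> bool" where
  "blackwell_NE A1 A2 mu r1 r2 fs gs \<longleftrightarrow>
     (\<exists>\<alpha>0>0. \<forall>\<alpha>. 0 < \<alpha> \<and> \<alpha> \<le> \<alpha>0 \<longrightarrow> disc_NE A1 A2 mu r1 r2 \<alpha> fs gs)"

end

theory Submission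
  imports Defs
begin


definition isgen :: "real^'n::finite^'n \<Rightarrow> bool" where
  "isgen Q \<longleftrightarrow> (\<forall>s s'. s \<noteq> s' \<longrightarrow> 0 \<le> Q$s$s') \<and> (\<forall>s. (\<Sum>s'\<in>UNIV. Q$s$s') = 0)"

lemma Mrow: "((\<alpha> *\<^sub>R mat 1 - Q) *v x) $ i = \<alpha> * x$i - (\<Sum>j\<in>UNIV. Q$i$j * x$j)"
  for Q :: "real^'n::finite^'n"
proof -
  have "((\<alpha> *\<^sub>R mat 1 - Q) *v x) $ i = (\<Sum>j\<in>UNIV. (if i = j then \<alpha> * x$j else 0) - Q$i$j * x$j)"
    by (auto simp: matrix_vector_mult_def mat_def left_diff_distrib intro!: sum.cong)
  also have "\<dots> = \<alpha> * x$i - (\<Sum>j\<in>UNIV. Q$i$j * x$j)"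
    by (simp add: sum_subtractf)
  finally show ?thesis .
qed

lemma maxp:
  fixes Q :: "real^'n::finite^'n"
  assumes a: "\<alpha> > 0" and g: "isgen Q" and h: "\<forall>s. 0 \<le> ((\<alpha> *\<^sub>R mat 1 - Q) *v x) $ s"
  shows "0 \<le> x $ s"
proof -
  define mn where "mn = Min (range (\<lambda>t. x$t))"
  have "mn \<in> range (\<lambda>t. x$t)" unfolding mn_def by (rule Min_in) auto
  then obtain s0 where s0e: "mn = x$s0" by auto
  have "mn \<le> x$t" for t unfolding mn_def by (rule Min_le) auto
  then have s0: "x$s0 \<le> x$t" for t using s0e by simp
  have "(\<Sum>j\<in>UNIV. Q$s0$j * x$j) = (\<Sum>j\<in>UNIV. Q$s0$j * (x$j - x$s0))"
    using g by (simp add: right_diff_distrib sum_subtractf sum_distrib_right[symmetric] isgen_def)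
  also have "\<dots> \<ge> 0"
    by (rule sum_nonneg) (metis g isgen_def s0 diff_ge_0_iff_ge mult_nonneg_nonneg mult_zero_right diff_self order_refl)
  finally have "\<alpha> * x$s0 \<ge> 0" using h[rule_format, of s0] unfolding Mrow by linarith
  then have "x$s0 \<ge> 0" using a by (simp add: zero_le_mult_iff)
  then show ?thesis using s0[of s] by linarith
qed

lemma ginv:
  fixes Q :: "real^'n::finite^'n"
  assumes a: "\<alpha> > 0" and g: "isgen Q"
  shows "invertible (\<alpha> *\<^sub>R mat 1 - Q)"
  unfolding invertible_left_inverse matrix_left_invertible_ker
proof (intro allI impI)
  fix x assume h: "(\<alpha> *\<^sub>R mat 1 - Q) *v x = 0"
  have 1: "0 \<le> x$s" for s by (rule maxp[OF a g]) (simp add: h)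
  have "(\<alpha> *\<^sub>R mat 1 - Q) *v (-x) = 0"
    by (metis h add.inverse_neutral diff_0 matrix_vector_mult_0_right matrix_vector_mult_diff_distrib)
  then have 2: "0 \<le> (-x)$s" for s by (intro maxp[OF a g]) simp
  show "x = 0" using 1 2 by (simp add: vec_eq_iff order_antisym)
qed

lemma inv_props:
  fixes M :: "real^'n::finite^'n"
  assumes "invertible M"
  shows "M ** matrix_inv M = mat 1 \<and> matrix_inv M ** M = mat 1"
  using assms unfolding invertible_def matrix_inv_def by (rule someI_ex)

lemma solve1:
  fixes M :: "real^'n::finite^'n"
  assumes "invertible M" shows "M *v (matrix_inv M *v r) = r"
  using inv_props[OF assms] by (simp add: matrix_vector_mul_assoc)

lemma solve2:
  fixes M :: "real^'n::finite^'n"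
  assumes "invertible M" "M *v u = r" shows "matrix_inv M *v r = u"
  using inv_props[OF assms(1)] assms(2) by (metis matrix_vector_mul_assoc matrix_vector_mul_lid)

lemma compare:
  fixes Q :: "real^'n::finite^'n"
  assumes a: "\<alpha> > 0" and g: "isgen Q"
    and h: "\<forall>s. r$s \<le> ((\<alpha> *\<^sub>R mat 1 - Q) *v v)$s"
  shows "(matrix_inv (\<alpha> *\<^sub>R mat 1 - Q) *v r)$s \<le> v$s"
proof -
  let ?M = "\<alpha> *\<^sub>R mat 1 - Q"
  have "?M *v (v - matrix_inv ?M *v r) = ?M *v v - r"
    by (simp add: matrix_vector_mult_diff_distrib solve1[OF ginv[OF a g]])
  then have "0 \<le> (v - matrix_inv ?M *v r)$s"
    by (intro maxp[OF a g]) (use h in simp)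
  then show ?thesis by simp
qed




lemma ctsg_fin: "ctsg A1 A2 mu \<Longrightarrow> finite (A1 s) \<and> finite (A2 s)"
  unfolding ctsg_def by simp

lemma rowsum0:
  assumes "ctsg A1 A2 mu" "a1 \<in> A1 s" "a2 \<in> A2 s"
  shows "(\<Sum>s'\<in>UNIV. mu s' s a1 a2) = 0"
proof -
  have "(\<Sum>s'\<in>UNIV. mu s' s a1 a2) = mu s s a1 a2 + (\<Sum>s'\<in>UNIV - {s}. mu s' s a1 a2)"
    by (rule sum.remove) auto
  then show ?thesis using assms unfolding ctsg_def by simp
qed

lemma genQ_isgen:
  fixes A1 :: "'s::finite \<Rightarrow> 'a1 set"
  assumes g: "ctsg A1 A2 mu" and f: "stationary A1 f" and gg: "stationary A2 g"
  shows "isgen (genQ A1 A2 mu f g)"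
  unfolding isgen_def
proof (intro conjI allI impI)
  fix s s' :: 's assume "s \<noteq> s'"
  then show "0 \<le> genQ A1 A2 mu f g $ s $ s'"
  proof -
    have "\<forall>a1\<in>A1 s. \<forall>a2\<in>A2 s. 0 \<le> f s a1 * g s a2 * mu s' s a1 a2"
      using g f gg \<open>s \<noteq> s'\<close> unfolding ctsg_def stationary_def
      by (metis mult_nonneg_nonneg)
    then show ?thesis unfolding genQ_def by (simp add: sum_nonneg)
  qed
next
  fix s :: 's
  have "(\<Sum>s'\<in>UNIV. genQ A1 A2 mu f g $ s $ s') =
     (\<Sum>a1\<in>A1 s. \<Sum>a2\<in>A2 s. f s a1 * g s a2 * (\<Sum>s'\<in>UNIV. mu s' s a1 a2))"
  proof -
    have "(\<Sum>s'\<in>UNIV. genQ A1 A2 mu f g $ s $ s') =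
       (\<Sum>s'\<in>UNIV. \<Sum>a1\<in>A1 s. \<Sum>a2\<in>A2 s. f s a1 * g s a2 * mu s' s a1 a2)"
      unfolding genQ_def by simp
    also have "\<dots> = (\<Sum>a1\<in>A1 s. \<Sum>s'\<in>UNIV. \<Sum>a2\<in>A2 s. f s a1 * g s a2 * mu s' s a1 a2)"
      by (rule sum.swap)
    also have "\<dots> = (\<Sum>a1\<in>A1 s. \<Sum>a2\<in>A2 s. \<Sum>s'\<in>UNIV. f s a1 * g s a2 * mu s' s a1 a2)"
      by (rule sum.cong[OF refl], rule sum.swap)
    finally show ?thesis by (simp add: sum_distrib_left)
  qed
  also have "\<dots> = 0" using rowsum0[OF g] by simp
  finally show "(\<Sum>s'\<in>UNIV. genQ A1 A2 mu f g $ s $ s') = 0" .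
qed

lemma pure_sum:
  assumes f: "stationary A f" and a: "a \<in> A s" and f1: "f s a = 1" and fin: "finite (A s)"
  shows "(\<Sum>b\<in>A s. f s b * h b) = h a"
proof -
  have "(\<Sum>b\<in>A s. f s b) = f s a + (\<Sum>b\<in>A s - {a}. f s b)"
    by (rule sum.remove[OF fin a])
  then have z: "(\<Sum>b\<in>A s - {a}. f s b) = 0" using f f1 unfolding stationary_def by simp
  have "\<forall>b\<in>A s - {a}. f s b = 0"
  proof -
    have "finite (A s - {a})" using fin by simp
    moreover have "\<forall>b\<in>A s - {a}. 0 \<le> f s b" using f unfolding stationary_def by simp
    ultimately show ?thesis using z sum_nonneg_eq_0_iff[of "A s - {a}" "f s"] by blast
  qed
  then have "(\<Sum>b\<in>A s - {a}. f s b * h b) = 0" by simp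
  moreover have "(\<Sum>b\<in>A s. f s b * h b) = f s a * h a + (\<Sum>b\<in>A s - {a}. f s b * h b)"
    by (rule sum.remove[OF fin a])
  ultimately show ?thesis using f1 by simp
qed




lemma genQ_pure2:
  assumes fin: "finite (A2 t)" and sg: "stationary A2 gs" and a: "a2s t \<in> A2 t" and g1: "gs t (a2s t) = 1"
  shows "genQ A1 A2 mu h gs $ t $ j = (\<Sum>b\<in>A1 t. h t b * mu j t b (a2s t))"
proof -
  have "(\<Sum>c\<in>A2 t. h t b * gs t c * mu j t b c) = h t b * mu j t b (a2s t)" for b
    using pure_sum[OF sg a g1 fin, of "\<lambda>c. h t b * mu j t b c"] by (simp add: mult_ac)
  then show ?thesis unfolding genQ_def by simp
qed

lemma rew_pure2:
  assumes fin: "finite (A2 t)" and sg: "stationary A2 gs" and a: "a2s t \<in> A2 t" and g1: "gs t (a2s t) = 1"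
  shows "rew A1 A2 r h gs $ t = (\<Sum>b\<in>A1 t. h t b * r t b (a2s t))"
proof -
  have "(\<Sum>c\<in>A2 t. h t b * gs t c * r t b c) = h t b * r t b (a2s t)" for b
    using pure_sum[OF sg a g1 fin, of "\<lambda>c. h t b * r t b c"] by (simp add: mult_ac)
  then show ?thesis unfolding rew_def by simp
qed

lemma sum_ind:
  assumes "finite A" "a \<in> A"
  shows "(\<Sum>b\<in>A. (if b = a then 1 else 0) * h b) = (h a :: real)"
proof -
  have "(\<Sum>b\<in>A. (if b = a then 1 else 0) * h b) = (\<Sum>b\<in>A. if b = a then h b else 0)"
    by (rule sum.cong) auto
  then show ?thesis using assms by simp
qed

lemma P1:
  fixes A1 :: "'s::finite \<Rightarrow> 'a1 set" and A2 :: "'s \<Rightarrow> 'a2 set"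
    and mu :: "'s \<Rightarrow> 's \<Rightarrow> 'a1 \<Rightarrow> 'a2 \<Rightarrow> real"
    and r :: "'s \<Rightarrow> 'a1 \<Rightarrow> 'a2 \<Rightarrow> real"
    and fs :: "'s \<Rightarrow> 'a1 \<Rightarrow> real" and gs :: "'s \<Rightarrow> 'a2 \<Rightarrow> real"
    and \<alpha>h :: real and a1s :: "'s \<Rightarrow> 'a1" and a2s :: "'s \<Rightarrow> 'a2" and p :: "'s \<Rightarrow> real"
  assumes game: "ctsg A1 A2 mu" and ah: "\<alpha>h > 0"
    and sf: "stationary A1 fs" and sg: "stationary A2 gs"
    and NE1: "\<forall>s f. stationary A1 f \<longrightarrow> disc_payoff A1 A2 mu r \<alpha>h f gs $ s \<le> disc_payoff A1 A2 mu r \<alpha>h fs gs $ s"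
    and np: "mu_norm A1 A2 mu > 0"
    and M1: "\<forall>s. a1s s \<in> A1 s \<and> a2s s \<in> A2 s \<and> fs s (a1s s) = 1 \<and> gs s (a2s s) = 1"
    and M2: "(\<forall>s. p s \<ge> 0) \<and> (\<Sum>s\<in>UNIV. p s) = 1 \<and>
       (\<forall>s s'. genQ A1 A2 mu fs gs $ s $ s' =
                 mu_norm A1 A2 mu * (p s' - (if s = s' then 1 else 0)))"
    and M3: "\<forall>s. \<forall>a1\<in>A1 s.
       (\<Sum>s'\<in>UNIV. p s' * r s' (a1s s') (a2s s')) \<ge>
       (\<Sum>s'\<in>UNIV. (mu s' s a1 (a2s s) / mu_norm A1 A2 mu + (if s = s' then 1 else 0))
                      * r s' (a1s s') (a2s s'))"
    and al: "0 < \<alpha>" "\<alpha> \<le> \<alpha>h" and f: "stationary A1 f"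
  shows "disc_payoff A1 A2 mu r \<alpha> f gs $ s \<le> disc_payoff A1 A2 mu r \<alpha> fs gs $ s"
proof -
  define m where "m = mu_norm A1 A2 mu"
  define R where "R t = r t (a1s t) (a2s t)" for t
  define P where "P = (\<Sum>t\<in>UNIV. p t * R t)"
  define M where "M \<beta> h = \<beta> *\<^sub>R (mat 1::real^'s^'s) - genQ A1 A2 mu h gs" for \<beta> h
  define v where "v \<beta> = disc_payoff A1 A2 mu r \<beta> fs gs" for \<beta>
  define G where "G \<beta> u t b = \<beta> * u$t - (\<Sum>s'\<in>UNIV. mu s' t b (a2s t) * u$s') - r t b (a2s t)"
    for \<beta> u t b
  define D where "D t a = m * P - (\<Sum>s'\<in>UNIV. mu s' t a (a2s t) * R s') - m * R t" for t a
  have mpos: "m > 0" using np m_def by simp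
  have fin1: "finite (A1 t)" and fin2: "finite (A2 t)" for t using ctsg_fin[OF game] by auto
  have gQ: "genQ A1 A2 mu h gs $ t $ j = (\<Sum>b\<in>A1 t. h t b * mu j t b (a2s t))" for h t j
    using genQ_pure2[OF fin2 sg] M1 by blast
  have rw: "rew A1 A2 r h gs $ t = (\<Sum>b\<in>A1 t. h t b * r t b (a2s t))" for h t
    using rew_pure2[OF fin2 sg] M1 by blast
  have fsp: "(\<Sum>b\<in>A1 t. fs t b * k b) = k (a1s t)" for t k
    using pure_sum[OF sf _ _ fin1] M1 by blast
  have key: "(M \<beta> h *v u)$t - rew A1 A2 r h gs $t = (\<Sum>b\<in>A1 t. h t b * G \<beta> u t b)"
    if h: "stationary A1 h" for \<beta> h u t
  proof -
    have s1: "(\<Sum>b\<in>A1 t. h t b) = 1" using h unfolding stationary_def by simp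
    have e1: "(\<Sum>b\<in>A1 t. h t b * G \<beta> u t b) = (\<Sum>b\<in>A1 t. h t b) * (\<beta> * u$t)
        - (\<Sum>b\<in>A1 t. h t b * (\<Sum>s'\<in>UNIV. mu s' t b (a2s t) * u$s'))
        - (\<Sum>b\<in>A1 t. h t b * r t b (a2s t))"
      unfolding G_def by (simp add: right_diff_distrib sum_subtractf sum_distrib_right)
    have "(\<Sum>j\<in>UNIV. genQ A1 A2 mu h gs $ t $ j * u$j)
        = (\<Sum>j\<in>UNIV. \<Sum>b\<in>A1 t. h t b * mu j t b (a2s t) * u$j)"
      unfolding gQ by (simp add: sum_distrib_right)
    also have "\<dots> = (\<Sum>b\<in>A1 t. \<Sum>j\<in>UNIV. h t b * mu j t b (a2s t) * u$j)"
      by (rule sum.swap)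
    also have "\<dots> = (\<Sum>b\<in>A1 t. h t b * (\<Sum>s'\<in>UNIV. mu s' t b (a2s t) * u$s'))"
      by (simp add: sum_distrib_left mult_ac)
    finally have e2: "(\<Sum>j\<in>UNIV. genQ A1 A2 mu h gs $ t $ j * u$j)
       = (\<Sum>b\<in>A1 t. h t b * (\<Sum>s'\<in>UNIV. mu s' t b (a2s t) * u$s'))" .
    show ?thesis unfolding M_def Mrow rw e1 e2 s1 by simp
  qed
  have isg: "isgen (genQ A1 A2 mu h gs)" if "stationary A1 h" for h
    by (rule genQ_isgen[OF game that sg])
  have invM: "invertible (M \<beta> h)" if "\<beta> > 0" "stationary A1 h" for \<beta> h
    unfolding M_def by (rule ginv[OF that(1) isg[OF that(2)]])
  have rewfs: "rew A1 A2 r fs gs $ t = R t" for t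
    unfolding rw fsp R_def ..
  have sump: "(\<Sum>t\<in>UNIV. p t) = 1" using M2 by blast
  define u where "u \<beta> = (\<chi> t. (R t + m / \<beta> * P) / (\<beta> + m))" for \<beta>
  have vform: "v \<beta> = u \<beta>" if bp: "\<beta> > 0" for \<beta>
  proof -
    have pu: "(\<Sum>j\<in>UNIV. p j * u \<beta> $ j) = P / \<beta>"
    proof -
      have "(\<Sum>j\<in>UNIV. p j * u \<beta> $ j) = (\<Sum>j\<in>UNIV. p j * R j + p j * (m / \<beta> * P)) / (\<beta> + m)"
        unfolding u_def by (simp add: sum_divide_distrib distrib_left)
      also have "\<dots> = (P + m / \<beta> * P) / (\<beta> + m)"
      proof -
        have "(\<Sum>j\<in>UNIV. p j * (m / \<beta> * P)) = (\<Sum>j\<in>UNIV. p j) * (m / \<beta> * P)"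
          by (rule sum_distrib_right[symmetric])
        then show ?thesis by (simp only: sum.distrib P_def sump mult_1_left)
      qed
      also have "\<dots> = P / \<beta>"
      proof -
        have "P + m / \<beta> * P = P / \<beta> * (\<beta> + m)" using bp by (simp add: field_simps)
        then show ?thesis using bp mpos by simp
      qed
      finally show ?thesis .
    qed
    have "M \<beta> fs *v u \<beta> = rew A1 A2 r fs gs"
    proof (subst vec_eq_iff, intro allI)
      fix t
      have "(\<Sum>j\<in>UNIV. genQ A1 A2 mu fs gs $ t $ j * u \<beta> $ j)
          = (\<Sum>j\<in>UNIV. m * (p j * u \<beta> $ j) - (if t = j then m * u \<beta> $ j else 0))"
      proof (rule sum.cong[OF refl])
        fix j
        have q: "genQ A1 A2 mu fs gs $ t $ j = m * (p j - (if t = j then 1 else 0))"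
          using M2 unfolding m_def by blast
        show "genQ A1 A2 mu fs gs $ t $ j * u \<beta> $ j = m * (p j * u \<beta> $ j) - (if t = j then m * u \<beta> $ j else 0)"
          unfolding q by (cases "t = j") (simp_all add: algebra_simps)
      qed
      also have "\<dots> = m * (P / \<beta>) - m * u \<beta> $ t"
        by (simp add: sum_subtractf sum_distrib_left[symmetric] pu)
      finally have "(M \<beta> fs *v u \<beta>) $ t = \<beta> * u \<beta> $ t - (m * (P / \<beta>) - m * u \<beta> $ t)"
        unfolding M_def Mrow by simp
      also have "\<dots> = R t"
      proof -
        have uu: "(\<beta> + m) * u \<beta> $ t = R t + m / \<beta> * P" unfolding u_def using bp mpos by simp
        have "\<beta> * u \<beta> $ t - (m * (P / \<beta>) - m * u \<beta> $ t) = (\<beta> + m) * u \<beta> $ t - m * (P / \<beta>)"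
          by (simp add: algebra_simps)
        then show ?thesis unfolding uu by simp
      qed
      finally show "(M \<beta> fs *v u \<beta>) $ t = rew A1 A2 r fs gs $ t" using rewfs by simp
    qed
    then show ?thesis unfolding v_def disc_payoff_def M_def[symmetric]
      by (rule solve2[OF invM[OF bp sf]])
  qed
  have G0: "G \<beta> (v \<beta>) t (a1s t) = 0" if bp: "\<beta> > 0" for \<beta> t
  proof -
    have "M \<beta> fs *v v \<beta> = rew A1 A2 r fs gs"
      unfolding v_def disc_payoff_def M_def[symmetric] by (rule solve1[OF invM[OF bp sf]])
    then show ?thesis using key[OF sf, of \<beta> "v \<beta>" t] fsp by simp
  qed
  have Gform: "G \<beta> (v \<beta>) t a = R t - r t a (a2s t) + D t a / (\<beta> + m)"
    if bp: "\<beta> > 0" and a: "a \<in> A1 t" for \<beta> t a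
  proof -
    have z: "(\<Sum>s'\<in>UNIV. mu s' t a (a2s t)) = 0" using rowsum0[OF game a] M1 by blast
    have "(\<Sum>s'\<in>UNIV. mu s' t a (a2s t) * u \<beta> $ s')
        = (\<Sum>s'\<in>UNIV. mu s' t a (a2s t) * R s' + mu s' t a (a2s t) * (m / \<beta> * P)) / (\<beta> + m)"
      unfolding u_def by (simp add: sum_divide_distrib distrib_left)
    also have "\<dots> = (\<Sum>s'\<in>UNIV. mu s' t a (a2s t) * R s') / (\<beta> + m)"
    proof -
      have "(\<Sum>s'\<in>UNIV. mu s' t a (a2s t) * (m / \<beta> * P)) = (\<Sum>s'\<in>UNIV. mu s' t a (a2s t)) * (m / \<beta> * P)"
        by (rule sum_distrib_right[symmetric])
      then show ?thesis by (simp only: sum.distrib z mult_zero_left add_0_right)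
    qed
    finally have e: "(\<Sum>s'\<in>UNIV. mu s' t a (a2s t) * u \<beta> $ s') = (\<Sum>s'\<in>UNIV. mu s' t a (a2s t) * R s') / (\<beta> + m)" .
    have bu: "\<beta> * u \<beta> $ t = (\<beta> * R t + m * P) / (\<beta> + m)"
    proof -
      have e1: "\<beta> * (R t + m / \<beta> * P) = \<beta> * R t + m * P" using bp by (simp add: algebra_simps)
      have "u \<beta> $ t = (R t + m / \<beta> * P) / (\<beta> + m)" unfolding u_def by simp
      then have "\<beta> * u \<beta> $ t = (\<beta> * (R t + m / \<beta> * P)) / (\<beta> + m)" by simp
      then show ?thesis unfolding e1 .
    qed
    have pm: "\<beta> + m \<noteq> 0" using bp mpos by simp
    have "R t + D t a / (\<beta> + m) = (R t * (\<beta> + m) + D t a) / (\<beta> + m)"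
      using pm by (simp add: field_simps)
    also have "\<dots> = (\<beta> * R t + m * P) / (\<beta> + m) - (\<Sum>s'\<in>UNIV. mu s' t a (a2s t) * R s') / (\<beta> + m)"
      unfolding D_def by (simp add: diff_divide_distrib[symmetric] algebra_simps)
    finally show ?thesis unfolding vform[OF bp] G_def e bu by simp
  qed
  have Dnn: "D t a \<ge> 0" if a: "a \<in> A1 t" for t a
  proof -
    have "(\<Sum>s'\<in>UNIV. (mu s' t a (a2s t) / m + (if t = s' then 1 else 0)) * R s')
       = (\<Sum>s'\<in>UNIV. mu s' t a (a2s t) * R s') / m + R t"
    proof -
      have "(\<Sum>s'\<in>UNIV. (if t = s' then 1 else 0) * R s') = (\<Sum>s'\<in>UNIV. if t = s' then R s' else 0)"
        by (rule sum.cong) auto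
      then show ?thesis by (simp add: distrib_right sum.distrib sum_divide_distrib)
    qed
    then have "P \<ge> (\<Sum>s'\<in>UNIV. mu s' t a (a2s t) * R s') / m + R t"
      using M3[rule_format, OF a] unfolding P_def R_def m_def by simp
    then have "m * P \<ge> m * ((\<Sum>s'\<in>UNIV. mu s' t a (a2s t) * R s') / m + R t)"
      using mpos by (simp add: mult_left_mono)
    moreover have "m * ((\<Sum>s'\<in>UNIV. mu s' t a (a2s t) * R s') / m + R t) = (\<Sum>s'\<in>UNIV. mu s' t a (a2s t) * R s') + m * R t"
      using mpos by (simp add: distrib_left)
    ultimately show ?thesis unfolding D_def by linarith
  qed
  have Gh: "G \<alpha>h (v \<alpha>h) s0 a \<ge> 0" if a: "a \<in> A1 s0" for s0 a
  proof (rule ccontr)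
    assume neg: "\<not> 0 \<le> G \<alpha>h (v \<alpha>h) s0 a"
    define f' where "f' = fs(s0 := (\<lambda>b. if b = a then 1 else 0))"
    have sf': "stationary A1 f'"
      unfolding stationary_def
    proof
      fix t show "(\<forall>b\<in>A1 t. 0 \<le> f' t b) \<and> (\<Sum>b\<in>A1 t. f' t b) = 1"
      proof (cases "t = s0")
        case True then show ?thesis using a fin1[of s0] by (simp add: f'_def)
      next
        case False then show ?thesis using sf by (simp add: f'_def stationary_def)
      qed
    qed
    define w where "w = disc_payoff A1 A2 mu r \<alpha>h f' gs"
    have Mw: "M \<alpha>h f' *v w = rew A1 A2 r f' gs"
      unfolding w_def disc_payoff_def M_def[symmetric] by (rule solve1[OF invM[OF ah sf']])
    have e: "(M \<alpha>h f' *v v \<alpha>h)$t - rew A1 A2 r f' gs $t \<le> 0" for t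
    proof (cases "t = s0")
      case True
      have "(\<Sum>b\<in>A1 t. f' t b * G \<alpha>h (v \<alpha>h) t b) = G \<alpha>h (v \<alpha>h) s0 a"
        using True a fin1[of s0] by (simp add: f'_def sum_ind)
      then show ?thesis using key[OF sf'] neg by simp
    next
      case False
      then have "(\<Sum>b\<in>A1 t. f' t b * G \<alpha>h (v \<alpha>h) t b) = 0"
        using fsp G0[OF ah] by (simp add: f'_def)
      then show ?thesis using key[OF sf'] by simp
    qed
    have "0 \<le> (w - v \<alpha>h) $ t" for t
    proof (rule maxp[OF ah isg[OF sf']])
      show "\<forall>s. 0 \<le> ((\<alpha>h *\<^sub>R mat 1 - genQ A1 A2 mu f' gs) *v (w - v \<alpha>h)) $ s"
        using e Mw unfolding M_def by (simp add: matrix_vector_mult_diff_distrib)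
    qed
    moreover have "w $ t \<le> v \<alpha>h $ t" for t using NE1 sf' unfolding w_def v_def by blast
    ultimately have "w = v \<alpha>h" by (simp add: vec_eq_iff order_antisym)
    then have "(M \<alpha>h f' *v v \<alpha>h)$s0 - rew A1 A2 r f' gs $s0 = 0" using Mw by simp
    moreover have "(\<Sum>b\<in>A1 s0. f' s0 b * G \<alpha>h (v \<alpha>h) s0 b) = G \<alpha>h (v \<alpha>h) s0 a"
      using a fin1[of s0] by (simp add: f'_def sum_ind)
    ultimately show False using key[OF sf', of \<alpha>h "v \<alpha>h" s0] neg by simp
  qed
  have Gpos: "G \<alpha> (v \<alpha>) t b \<ge> 0" if b: "b \<in> A1 t" for t b
  proof -
    have "D t b / (\<alpha>h + m) \<le> D t b / (\<alpha> + m)"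
      using Dnn[OF b] al mpos by (intro divide_left_mono) auto
    then show ?thesis using Gh[OF b] Gform[OF al(1) b] Gform[OF ah b] by simp
  qed
  have "\<forall>t. rew A1 A2 r f gs $ t \<le> ((\<alpha> *\<^sub>R mat 1 - genQ A1 A2 mu f gs) *v v \<alpha>) $ t"
  proof
    fix t
    have "0 \<le> (\<Sum>b\<in>A1 t. f t b * G \<alpha> (v \<alpha>) t b)"
      using f Gpos unfolding stationary_def by (intro sum_nonneg mult_nonneg_nonneg) auto
    then show "rew A1 A2 r f gs $ t \<le> ((\<alpha> *\<^sub>R mat 1 - genQ A1 A2 mu f gs) *v v \<alpha>) $ t"
      using key[OF f, of \<alpha> "v \<alpha>" t] unfolding M_def by simp
  qed
  from compare[OF al(1) isg[OF f] this]
  show ?thesis unfolding v_def disc_payoff_def .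
qed




lemma swap_ctsg:
  fixes A1 :: "'s::finite \<Rightarrow> 'a1 set" and A2 :: "'s \<Rightarrow> 'a2 set" and mu :: "'s \<Rightarrow> 's \<Rightarrow> 'a1 \<Rightarrow> 'a2 \<Rightarrow> real"
  shows "ctsg A2 A1 (\<lambda>s' s b a. mu s' s a b) = ctsg A1 A2 mu"
  unfolding ctsg_def
  apply (rule iffI)
   apply (elim conjE, intro conjI)
     apply (simp; fail)
    apply (intro allI impI, simp)
   apply (intro allI impI, simp)
  apply (elim conjE, intro conjI)
    apply (simp; fail)
   apply (intro allI impI, simp)
  apply (intro allI impI, simp)
  done

lemma swap_norm:
  fixes A1 :: "'s::finite \<Rightarrow> 'a1 set" and A2 :: "'s \<Rightarrow> 'a2 set" and mu :: "'s \<Rightarrow> 's \<Rightarrow> 'a1 \<Rightarrow> 'a2 \<Rightarrow> real"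
  shows "mu_norm A2 A1 (\<lambda>s' s b a. mu s' s a b) = mu_norm A1 A2 mu"
  unfolding mu_norm_def by (rule arg_cong[where f=Max]) auto

lemma swap_genQ:
  fixes A1 :: "'s::finite \<Rightarrow> 'a1 set"
  shows "genQ A2 A1 (\<lambda>s' s b a. mu s' s a b) g f = genQ A1 A2 mu f g"
proof -
  have 1: "(\<Sum>a2\<in>A2 s. \<Sum>a1\<in>A1 s. g s a2 * f s a1 * mu s' s a1 a2) = (\<Sum>a1\<in>A1 s. \<Sum>a2\<in>A2 s. f s a1 * g s a2 * mu s' s a1 a2)" for s s'
    by (rule trans[OF sum.swap]) (simp add: mult_ac)
  show ?thesis unfolding genQ_def vec_eq_iff using 1 by simp
qed
lemma swap_rew:
  fixes A1 :: "'s::finite \<Rightarrow> 'a1 set"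
  shows "rew A2 A1 (\<lambda>s b a. r s a b) g f = rew A1 A2 r f g"
proof -
  have 1: "(\<Sum>a2\<in>A2 s. \<Sum>a1\<in>A1 s. g s a2 * f s a1 * r s a1 a2) = (\<Sum>a1\<in>A1 s. \<Sum>a2\<in>A2 s. f s a1 * g s a2 * r s a1 a2)" for s
    by (rule trans[OF sum.swap]) (simp add: mult_ac)
  show ?thesis unfolding rew_def vec_eq_iff using 1 by simp
qed
lemma swap_pay:
  fixes A1 :: "'s::finite \<Rightarrow> 'a1 set"
  shows "disc_payoff A2 A1 (\<lambda>s' s b a. mu s' s a b) (\<lambda>s b a. r s a b) \<alpha> g f = disc_payoff A1 A2 mu r \<alpha> f g"
  unfolding disc_payoff_def
  by (rule arg_cong2[where f="\<lambda>M v. matrix_inv (\<alpha> *\<^sub>R mat 1 - M) *v v"], rule swap_genQ, rule swap_rew)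

theorem theorem5:
  fixes A1 :: "'s::finite \<Rightarrow> 'a1 set" and A2 :: "'s \<Rightarrow> 'a2 set"
    and mu :: "'s \<Rightarrow> 's \<Rightarrow> 'a1 \<Rightarrow> 'a2 \<Rightarrow> real"
    and r1 r2 :: "'s \<Rightarrow> 'a1 \<Rightarrow> 'a2 \<Rightarrow> real"
    and fs :: "'s \<Rightarrow> 'a1 \<Rightarrow> real" and gs :: "'s \<Rightarrow> 'a2 \<Rightarrow> real"
    and \<alpha>h :: real and a1s :: "'s \<Rightarrow> 'a1" and a2s :: "'s \<Rightarrow> 'a2" and p :: "'s \<Rightarrow> real"
  assumes game: "ctsg A1 A2 mu"
    and alpha_pos: "\<alpha>h > 0"
    and NE: "disc_NE A1 A2 mu r1 r2 \<alpha>h fs gs"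
    and norm_pos: "mu_norm A1 A2 mu > 0"
    and M1: "\<forall>s. a1s s \<in> A1 s \<and> a2s s \<in> A2 s \<and> fs s (a1s s) = 1 \<and> gs s (a2s s) = 1"
    and M2: "(\<forall>s. p s \<ge> 0) \<and> (\<Sum>s\<in>UNIV. p s) = 1 \<and>
       (\<forall>s s'. genQ A1 A2 mu fs gs $ s $ s' =
                 mu_norm A1 A2 mu * (p s' - (if s = s' then 1 else 0)))"
    and M3a: "\<forall>s. \<forall>a1\<in>A1 s.
       (\<Sum>s'\<in>UNIV. p s' * r1 s' (a1s s') (a2s s')) \<ge>
       (\<Sum>s'\<in>UNIV. (mu s' s a1 (a2s s) / mu_norm A1 A2 mu + (if s = s' then 1 else 0))
                      * r1 s' (a1s s') (a2s s'))"
    and M3b: "\<forall>s. \<forall>a2\<in>A2 s.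
       (\<Sum>s'\<in>UNIV. p s' * r2 s' (a1s s') (a2s s')) \<ge>
       (\<Sum>s'\<in>UNIV. (mu s' s (a1s s) a2 / mu_norm A1 A2 mu + (if s = s' then 1 else 0))
                      * r2 s' (a1s s') (a2s s'))"
  shows "blackwell_NE A1 A2 mu r1 r2 fs gs"
  unfolding blackwell_NE_def
proof (intro exI[of _ \<alpha>h] conjI allI impI alpha_pos)
  fix \<alpha> assume al: "0 < \<alpha> \<and> \<alpha> \<le> \<alpha>h"
  have sf: "stationary A1 fs" and sg: "stationary A2 gs" using NE unfolding disc_NE_def by simp_all
  have NE1: "\<forall>s f. stationary A1 f \<longrightarrow> disc_payoff A1 A2 mu r1 \<alpha>h f gs $ s \<le> disc_payoff A1 A2 mu r1 \<alpha>h fs gs $ s"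
    using NE unfolding disc_NE_def by simp
  have NE2: "\<forall>s g. stationary A2 g \<longrightarrow> disc_payoff A1 A2 mu r2 \<alpha>h fs g $ s \<le> disc_payoff A1 A2 mu r2 \<alpha>h fs gs $ s"
    using NE unfolding disc_NE_def by simp
  let ?mu' = "\<lambda>s' s b a. mu s' s a b" and ?r' = "\<lambda>s b a. r2 s a b"
  have game': "ctsg A2 A1 ?mu'" using game swap_ctsg[of A2 A1 mu] by simp
  have np': "mu_norm A2 A1 ?mu' > 0" using norm_pos swap_norm[of A2 A1 mu] by simp
  have NE2': "\<forall>s g. stationary A2 g \<longrightarrow> disc_payoff A2 A1 ?mu' ?r' \<alpha>h g fs $ s \<le> disc_payoff A2 A1 ?mu' ?r' \<alpha>h gs fs $ s"
    unfolding swap_pay[of A2 A1 mu r2] using NE2 .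
  have M1': "\<forall>s. a2s s \<in> A2 s \<and> a1s s \<in> A1 s \<and> gs s (a2s s) = 1 \<and> fs s (a1s s) = 1"
    using M1 by simp
  have M2': "(\<forall>s. p s \<ge> 0) \<and> (\<Sum>s\<in>UNIV. p s) = 1 \<and>
       (\<forall>s s'. genQ A2 A1 ?mu' gs fs $ s $ s' =
                 mu_norm A2 A1 ?mu' * (p s' - (if s = s' then 1 else 0)))"
    unfolding swap_genQ[of A2 A1 mu] swap_norm[of A2 A1 mu] using M2 .
  have M3b': "\<forall>s. \<forall>a2\<in>A2 s.
       (\<Sum>s'\<in>UNIV. p s' * ?r' s' (a2s s') (a1s s')) \<ge>
       (\<Sum>s'\<in>UNIV. (?mu' s' s a2 (a1s s) / mu_norm A2 A1 ?mu' + (if s = s' then 1 else 0))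
                      * ?r' s' (a2s s') (a1s s'))"
    unfolding swap_norm[of A2 A1 mu] using M3b by simp
  show "disc_NE A1 A2 mu r1 r2 \<alpha> fs gs"
    unfolding disc_NE_def
  proof (intro conjI sf sg allI impI)
    fix s f assume f: "stationary A1 f"
    show "disc_payoff A1 A2 mu r1 \<alpha> f gs $ s \<le> disc_payoff A1 A2 mu r1 \<alpha> fs gs $ s"
      by (rule P1[OF game alpha_pos sf sg NE1 norm_pos M1 M2 M3a _ _ f]) (use al in auto)
  next
    fix s g assume g: "stationary A2 g"
    have "disc_payoff A2 A1 ?mu' ?r' \<alpha> g fs $ s \<le> disc_payoff A2 A1 ?mu' ?r' \<alpha> gs fs $ s"
      by (rule P1[OF game' alpha_pos sg sf NE2' np' M1' M2' M3b' _ _ g]) (use al in auto)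
    then show "disc_payoff A1 A2 mu r2 \<alpha> fs g $ s \<le> disc_payoff A1 A2 mu r2 \<alpha> fs gs $ s"
      unfolding swap_pay[of A2 A1 mu r2] .
  qed
qed


end
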